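(* Let $p$ be a binary word of length $l$ with $r$ runs, let $r_i$ be the number of runs of size $i$, and let $r_{2,b}\in\{0,1,2\}$ be the number of runs of size $2$ that are the first or the last run of $p$. For every $n\ge 3$: if $l\ge 3$ then $$B_{n,p}(3)=r_1\binom{n-r-1}{l-r+1}+(r_2-r_{2,b})\binom{n-r-1}{l-r}+r_{2,b}\binom{n-r}{l-r+1},$$ and if $l<3$ then $B_{n,p}(3)=\binom{n}{3}$ when $r=1$, and $B_{n,p}(3)=3(n-3)$ when $r=2$.
   Context: $c_p(w)$ is the number of occurrences of $p$ as a (not necessarily consecutive) subsequence of the binary word $w$; $B_{n,p}(k)$ is the number of binary words of length $n$ with $c_p(w)=k$. A run is a maximal block of consecutive equal letters; its size is its length. Convention: $\binom{a}{b}=0$ unless $0\le b\le a$. *)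

theory Defs
  imports Main
begin

definition occ :: "bool list \<Rightarrow> bool list \<Rightarrow> nat" where
  "occ p w = card {I. I \<subseteq> {..<length w} \<and> card I = length p \<and> nths w I = p}"

definition Bnp :: "nat \<Rightarrow> bool list \<Rightarrow> nat \<Rightarrow> nat" where
  "Bnp n p k = card {w :: bool list. length w = n \<and> occ p w = k}"

fun runs :: "'a list \<Rightarrow> 'a list list" where
  "runs [] = []"
| "runs (x # xs) = (case runs xs of
      [] \<Rightarrow> [[x]]
    | g # gs \<Rightarrow> (if hd g = x then (x # g) # gs else [x] # g # gs))"

definition run_sizes :: "'a list \<Rightarrow> nat list" where
  "run_sizes p = map length (runs p)"

definition runs_of_size :: "'a list \<Rightarrow> nat \<Rightarrow> nat" where
  "runs_of_size p i = card {j. j < length (run_sizes p) \<and> run_sizes p ! j = i}"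

definition runs2_boundary :: "'a list \<Rightarrow> nat" where
  "runs2_boundary p = card {j. j < length (run_sizes p) \<and> (j = 0 \<or> j = length (run_sizes p) - 1)
                              \<and> run_sizes p ! j = 2}"

definition binom :: "int \<Rightarrow> int \<Rightarrow> nat" where
  "binom a b = (if 0 \<le> b \<and> b \<le> a then nat a choose nat b else 0)"

end

theory Submission
  imports Defs
begin



fun oc :: "bool list \<Rightarrow> bool list \<Rightarrow> nat" where
  "oc [] w = 1"
| "oc (x#p) [] = 0"
| "oc (x#p) (y#w) = oc (x#p) w + (if x = y then oc p w else 0)"

definition OS :: "bool list \<Rightarrow> bool list \<Rightarrow> nat set set" where
  "OS p w = {I. I \<subseteq> {..<length w} \<and> card I = length p \<and> nths w I = p}"

lemma OS_Nil_p: "OS [] w = {{}}"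
proof -
  have "I = {}" if "I \<subseteq> {..<length w}" "card I = 0" for I :: "nat set"
    using that finite_subset[OF that(1)] by auto
  then show ?thesis unfolding OS_def by auto
qed

lemma OS_Nil_w: "p \<noteq> [] \<Longrightarrow> OS p [] = {}"
  unfolding OS_def by auto

lemma nths_Suc_img: "nths (y#w) (Suc ` J) = nths w J"
  by (simp add: nths_Cons image_iff)

lemma nths_ins0: "nths (y#w) (insert 0 (Suc ` J)) = y # nths w J"
  by (simp add: nths_Cons image_iff)

lemma OS_Cons:
  "OS (x#p) (y#w) = (\<lambda>J. Suc ` J) ` OS (x#p) w \<union>
     (if x = y then (\<lambda>J. insert 0 (Suc ` J)) ` OS p w else {})"
    (is "?L = ?A \<union> ?B")
proof (rule set_eqI)
  fix I
  show "I \<in> ?L \<longleftrightarrow> I \<in> ?A \<union> ?B"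
  proof
    assume I: "I \<in> ?L"
    define J where "J = {j. Suc j \<in> I}"
    have sub: "I \<subseteq> {..<Suc (length w)}" and cI: "card I = Suc (length p)"
      and nI: "nths (y#w) I = x # p" using I by (auto simp: OS_def)
    have Jsub: "J \<subseteq> {..<length w}" using sub by (auto simp: J_def)
    have finJ: "finite J" using Jsub finite_subset by blast
    show "I \<in> ?A \<union> ?B"
    proof (cases "0 \<in> I")
      case False
      have IJ: "I = Suc ` J"
      proof
        show "I \<subseteq> Suc ` J" using False by (auto simp: J_def image_iff) (metis not0_implies_Suc)
      qed (auto simp: J_def)
      have "card J = Suc (length p)" using cI IJ by (simp add: card_image)
      moreover have "nths w J = x # p" using nI IJ nths_Suc_img by metis
      ultimately have "J \<in> OS (x#p) w" using Jsub by (simp add: OS_def)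
      then show ?thesis using IJ by blast
    next
      case True
      have IJ: "I = insert 0 (Suc ` J)"
      proof
        show "I \<subseteq> insert 0 (Suc ` J)" by (auto simp: J_def image_iff) (metis not0_implies_Suc)
      qed (auto simp: J_def True)
      have "card I = Suc (card J)" using IJ finJ by (simp add: card_image)
      then have "card J = length p" using cI by simp
      moreover have "y # nths w J = x # p" using nI IJ nths_ins0 by metis
      ultimately show ?thesis using Jsub IJ by (auto simp: OS_def)
    qed
  next
    assume "I \<in> ?A \<union> ?B"
    then show "I \<in> ?L"
    proof
      assume "I \<in> ?A"
      then obtain J where J: "J \<in> OS (x#p) w" and IJ: "I = Suc ` J" by blast
      then show ?thesis by (auto simp: OS_def card_image nths_Suc_img)
    next
      assume "I \<in> ?B"
      then obtain J where J: "J \<in> OS p w" and IJ: "I = insert 0 (Suc ` J)" and xy: "x = y"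
        by (auto split: if_splits)
      have finJ: "finite J" using J finite_subset by (auto simp: OS_def)
      have "card I = Suc (card J)" using IJ finJ by (simp add: card_image)
      then show ?thesis using J IJ xy by (auto simp: OS_def nths_ins0)
    qed
  qed
qed

lemma occ_oc: "card (OS p w) = oc p w"
proof (induction w arbitrary: p)
  case Nil
  then show ?case by (cases p) (auto simp: OS_Nil_p OS_Nil_w)
next
  case (Cons y w)
  note IH0 = Cons.IH
  show ?case
  proof (cases p)
    case Nil
    then show ?thesis by (simp add: OS_Nil_p)
  next
    case (Cons x p')
    have fin: "finite (OS q v)" for q v
      unfolding OS_def by (rule finite_subset[of _ "Pow {..<length v}"]) auto
    have inj1: "inj_on (\<lambda>J. Suc ` J) X" for X :: "nat set set"
      by (rule inj_onI) (simp add: inj_image_eq_iff)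
    have inj2: "inj_on (\<lambda>J. insert 0 (Suc ` J)) X" for X :: "nat set set"
    proof (rule inj_onI)
      fix a b :: "nat set" assume "insert 0 (Suc ` a) = insert 0 (Suc ` b)"
      then have "Suc ` a = Suc ` b"
        by (metis Diff_insert_absorb image_iff nat.distinct(1))
      then show "a = b" by (simp add: inj_image_eq_iff)
    qed
    have disj: "(\<lambda>J. Suc ` J) ` OS (x#p') w \<inter> (\<lambda>J. insert 0 (Suc ` J)) ` OS p' w = {}"
      by auto
    note IH = IH0
    show ?thesis
      using Cons IH
      apply (simp add: OS_Cons)
      apply (subst card_Un_disjoint)
      using fin disj apply (auto simp: card_image[OF inj1] card_image[OF inj2])
      done
  qed
qed

lemma occ_eq_oc: "occ p w = oc p w"
  using occ_oc by (simp add: occ_def OS_def)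




lemma oc_mono_Cons: "oc q w \<le> oc q (y#w)"
  by (cases q) auto

lemma oc_pos_tl: "oc (x#X) w > 0 \<Longrightarrow> oc X w > 0"
proof (induction w)
  case (Cons y w)
  then show ?case using oc_mono_Cons[of X w y] by (auto split: if_splits)
qed simp

lemma oc_pos_app: "oc (Y @ Z) w > 0 \<Longrightarrow> oc Z w > 0"
  by (induction Y) (auto dest: oc_pos_tl)

lemma oc_two: "oc (x # Y @ x # Z) w > 0 \<Longrightarrow> oc (x#Z) w \<ge> 2"
proof (induction w)
  case Nil then show ?case by simp
next
  case (Cons y w)
  show ?case
  proof (cases "oc (x # Y @ x # Z) w > 0")
    case True
    then have "oc (x#Z) w \<ge> 2" using Cons.IH by blast
    then show ?thesis by simp
  next
    case False
    then have xy: "x = y" and o: "oc (Y @ x # Z) w > 0" using Cons.prems by (auto split: if_splits)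
    have a: "oc (x#Z) w > 0" using oc_pos_app[OF o] .
    have b: "oc Z w > 0" using oc_pos_tl[OF a] .
    show ?thesis using a b xy by simp
  qed
qed

lemma oc_two0: "oc (x # x # Z) w > 0 \<Longrightarrow> oc (x#Z) w \<ge> 2"
  using oc_two[of x "[]" Z w] by simp

lemma oc_Nil_w: "oc q [] = (if q = [] then 1 else 0)"
  by (cases q) auto

definition cnt :: "nat \<Rightarrow> (bool list \<Rightarrow> bool) \<Rightarrow> nat" where
  "cnt n P = card {w. length w = n \<and> P w}"

lemma cnt_fin: "finite {w::bool list. length w = n \<and> P w}"
  by (rule finite_subset[OF _ finite_lists_length_eq[of "UNIV::bool set" n]]) auto

lemma cnt_0: "cnt 0 P = (if P [] then 1 else 0)"
proof -
  have "{w::bool list. length w = 0 \<and> P w} = (if P [] then {[]} else {})" by auto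
  then show ?thesis by (simp add: cnt_def)
qed

lemma cnt_Suc: "cnt (Suc n) P = cnt n (\<lambda>w. P (x#w)) + cnt n (\<lambda>w. P ((\<not>x)#w))"
proof -
  have e: "{w. length w = Suc n \<and> P w} =
      (Cons x) ` {w. length w = n \<and> P (x#w)} \<union> (Cons (\<not>x)) ` {w. length w = n \<and> P ((\<not>x)#w)}"
  proof (rule set_eqI)
    fix w show "w \<in> {w. length w = Suc n \<and> P w} \<longleftrightarrow> w \<in> (Cons x) ` {w. length w = n \<and> P (x#w)} \<union> (Cons (\<not>x)) ` {w. length w = n \<and> P ((\<not>x)#w)}"
    proof (cases w)
      case (Cons a v)
      then show ?thesis by (cases "a = x") (auto simp: image_iff)
    qed auto
  qed
  show ?thesis unfolding cnt_def e
    by (subst card_Un_disjoint) (auto simp: cnt_fin card_image)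
qed

lemma cnt_cong: "(\<And>w. P w = Q w) \<Longrightarrow> cnt n P = cnt n Q"
  by (simp add: cnt_def)

lemma cnt_disj: "(\<And>w. \<not> (P w \<and> Q w)) \<Longrightarrow> cnt n (\<lambda>w. P w \<or> Q w) = cnt n P + cnt n Q"
proof -
  assume d: "\<And>w. \<not> (P w \<and> Q w)"
  have e: "{w. length w = n \<and> (P w \<or> Q w)} = {w. length w = n \<and> P w} \<union> {w. length w = n \<and> Q w}" by auto
  show ?thesis unfolding cnt_def e
    by (subst card_Un_disjoint) (use d in \<open>auto simp: cnt_fin\<close>)
qed

lemma cnt_False: "cnt n (\<lambda>w. False) = 0"
  by (simp add: cnt_def)




lemma runs_ne: "xs \<noteq> [] \<Longrightarrow> \<exists>g gs. runs xs = g # gs \<and> g \<noteq> [] \<and> hd g = hd xs"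
proof (induction xs)
  case (Cons x xs)
  show ?case
  proof (cases xs)
    case Nil then show ?thesis by simp
  next
    case (Cons y ys)
    then obtain g gs where "runs xs = g # gs" "g \<noteq> []" "hd g = hd xs" using Cons.IH by auto
    then show ?thesis by auto
  qed
qed simp

lemma runs_nonempty: "g \<in> set (runs xs) \<Longrightarrow> g \<noteq> []"
proof (induction xs arbitrary: g)
  case (Cons x xs)
  then show ?case by (auto split: list.splits if_splits)
qed simp

lemma rs_single: "run_sizes [x] = [1]"
  by (simp add: run_sizes_def)

lemma rs_same: "q \<noteq> [] \<Longrightarrow> hd q = x \<Longrightarrow> run_sizes (x#q) = Suc (hd (run_sizes q)) # tl (run_sizes q)"
  using runs_ne[of q] by (auto simp: run_sizes_def)

lemma rs_diff: "q \<noteq> [] \<Longrightarrow> hd q \<noteq> x \<Longrightarrow> run_sizes (x#q) = 1 # run_sizes q"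
  using runs_ne[of q] by (auto simp: run_sizes_def)

lemma rs_ne: "q \<noteq> [] \<Longrightarrow> run_sizes q \<noteq> []"
  using runs_ne[of q] by (auto simp: run_sizes_def)

lemma rs_Nil: "run_sizes [] = []" by (simp add: run_sizes_def)

lemma rs_pos: "0 \<notin> set (run_sizes q)"
  using runs_nonempty[of _ q] by (auto simp: run_sizes_def)

lemma len_rs: "length (run_sizes q) \<le> length q"
proof (induction q)
  case (Cons x q)
  show ?case
  proof (cases "q = []")
    case True then show ?thesis by (simp add: rs_single)
  next
    case False
    then show ?thesis using Cons.IH
      by (cases "hd q = x") (simp_all add: rs_same rs_diff rs_ne)
  qed
qed (simp add: rs_Nil)

definition sb :: "int \<Rightarrow> nat \<Rightarrow> nat" where
  "sb N g = (if N < 0 then 0 else if g = 0 then (if N = 0 then 1 else 0) else (nat N + g - 1) choose (g - 1))"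

lemma sb_pascal: "sb M (Suc h) = sb M h + sb (M - 1) (Suc h)"
proof -
  consider "M < 0" | "M = 0" | "M > 0" by linarith
  then show ?thesis
  proof cases
    case 3
    show ?thesis
    proof (cases h)
      case 0 then show ?thesis using 3 by (simp add: sb_def)
    next
      case (Suc k)
      have "nat M + h = Suc (nat M + k)" using Suc 3 by simp
      moreover have "nat (M - 1) + Suc h - 1 = nat M + k" using Suc 3 by simp
      moreover have "nat M + k = Suc (nat (M - 1) + k)" using 3 by simp
      ultimately show ?thesis using 3 Suc by (simp add: sb_def)
    qed
  qed (auto simp: sb_def)
qed

lemma sb_neg: "N < 0 \<Longrightarrow> sb N g = 0" by (simp add: sb_def)

definition fl :: "bool \<Rightarrow> bool list \<Rightarrow> bool" where
  "fl c q = (q \<noteq> [] \<and> hd q = c)"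

definition g1 :: "bool \<Rightarrow> bool list \<Rightarrow> nat" where
  "g1 c q = length q - length (run_sizes q) + 1 + (if fl c q then 1 else 0)"

definition el :: "bool \<Rightarrow> bool list \<Rightarrow> nat list" where
  "el c q = (if fl c q then tl (run_sizes q) else run_sizes q)"

definition lastb :: "nat list \<Rightarrow> nat" where
  "lastb xs = (if xs \<noteq> [] \<and> last xs = 2 then 1 else 0)"

definition e1cf :: "bool \<Rightarrow> bool list \<Rightarrow> int \<Rightarrow> nat" where
  "e1cf c q N = sb (N - int (length q)) (g1 c q)"

definition e3cf :: "bool \<Rightarrow> bool list \<Rightarrow> int \<Rightarrow> nat" where
  "e3cf c q N = count_list (el c q) 1 * sb (N - int (length q) - 2) (g1 c q)
     + count_list (butlast (el c q)) 2 * sb (N - int (length q) - 1) (g1 c q - 1)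
     + lastb (el c q) * sb (N - int (length q) - 1) (g1 c q)"

definition fcf :: "bool \<Rightarrow> bool list \<Rightarrow> int \<Rightarrow> nat" where
  "fcf x q N = (if q = [] \<or> hd q \<noteq> x then e1cf x q (N - 2)
     else if tl q = [] then e1cf x q (N - 1)
     else if hd (tl q) \<noteq> x then e1cf x (tl q) (N - 2) else 0)"

lemma g1_pos: "g1 c q \<ge> 1" by (simp add: g1_def)

lemma g1_Cons: "g1 c (x#q) = g1 x q + (if c = x then 1 else 0)"
proof (cases "q = []")
  case True then show ?thesis by (simp add: g1_def fl_def rs_single rs_Nil)
next
  case False
  have l: "length (run_sizes q) \<le> length q" by (rule len_rs)
  show ?thesis
  proof (cases "hd q = x")
    case True then show ?thesis using False l by (simp add: g1_def fl_def rs_same rs_ne Suc_diff_le)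
  next
    case F2: False then show ?thesis using False l by (simp add: g1_def fl_def rs_diff Suc_diff_le)
  qed
qed

lemma el_same: "el x (x#q) = el x q"
  by (cases "q = []"; cases "hd q = x") (simp_all add: el_def fl_def rs_single rs_Nil rs_same rs_diff rs_ne)

lemma el_diff: "c \<noteq> x \<Longrightarrow> el c (x#q) = run_sizes (x#q)"
  by (simp add: el_def fl_def)

lemma e1cf_rec: "e1cf c (x#q) (N+1) = e1cf x q N + (if c = x then e1cf c (x#q) N else 0)"
proof (cases "c = x")
  case True
  then show ?thesis
    using sb_pascal[of "N - int (length q)" "g1 x q"] by (simp add: e1cf_def g1_Cons algebra_simps)
next
  case False
  then show ?thesis by (simp add: e1cf_def g1_Cons algebra_simps)
qed

lemma e3cf_same: "e3cf x (x#q) (N+1) = e3cf x q N + e3cf x (x#q) N"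
proof -
  obtain h where h: "g1 x q = Suc h" using g1_pos[of x q] by (cases "g1 x q") auto
  define M where "M = N - int (length q)"
  have p1: "sb (M - 2) (Suc (Suc h)) = sb (M - 2) (Suc h) + sb (M - 3) (Suc (Suc h))"
    using sb_pascal[of "M - 2" "Suc h"] by (simp add: algebra_simps)
  have p2: "sb (M - 1) (Suc h) = sb (M - 1) h + sb (M - 2) (Suc h)"
    using sb_pascal[of "M - 1" h] by (simp add: algebra_simps)
  have p3: "sb (M - 1) (Suc (Suc h)) = sb (M - 1) (Suc h) + sb (M - 2) (Suc (Suc h))"
    using sb_pascal[of "M - 1" "Suc h"] by (simp add: algebra_simps)
  have a1: "N + 1 - int (length (x#q)) - 2 = M - 2" by (simp add: M_def)
  have a2: "N + 1 - int (length (x#q)) - 1 = M - 1" by (simp add: M_def)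
  have a3: "N - int (length (x#q)) - 2 = M - 3" by (simp add: M_def)
  have a4: "N - int (length (x#q)) - 1 = M - 2" by (simp add: M_def)
  have a5: "N - int (length q) - 2 = M - 2" by (simp add: M_def)
  have a6: "N - int (length q) - 1 = M - 1" by (simp add: M_def)
  have g: "g1 x (x#q) = Suc (Suc h)" by (simp add: g1_Cons h)
  show ?thesis
    unfolding e3cf_def el_same a1 a2 a3 a4 a5 a6 g h
    by (simp only: p1 p2 p3 diff_Suc_1 add_mult_distrib2)
qed

lemma e3cf_diff: assumes "c \<noteq> x" shows "e3cf c (x#q) (N+1) = e3cf x q N + fcf x q N"
proof -
  define M where "M = N - int (length q)"
  have g: "g1 c (x#q) = g1 x q" using assms by (simp add: g1_Cons)
  have e: "el c (x#q) = run_sizes (x#q)" using assms by (simp add: el_diff)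
  have a1: "N + 1 - int (length (x#q)) - 2 = M - 2" by (simp add: M_def)
  have a2: "N + 1 - int (length (x#q)) - 1 = M - 1" by (simp add: M_def)
  have a5: "N - int (length q) - 2 = M - 2" by (simp add: M_def)
  have a6: "N - int (length q) - 1 = M - 1" by (simp add: M_def)
  have a7: "N - 2 - int (length q) = M - 2" by (simp add: M_def)
  have lhs: "e3cf c (x#q) (N+1) = count_list (run_sizes (x#q)) 1 * sb (M - 2) (g1 x q)
     + count_list (butlast (run_sizes (x#q))) 2 * sb (M - 1) (g1 x q - 1)
     + lastb (run_sizes (x#q)) * sb (M - 1) (g1 x q)"
    unfolding e3cf_def g e a1 a2 by simp
  have rhs: "e3cf x q N = count_list (el x q) 1 * sb (M - 2) (g1 x q)
     + count_list (butlast (el x q)) 2 * sb (M - 1) (g1 x q - 1)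
     + lastb (el x q) * sb (M - 1) (g1 x q)"
    unfolding e3cf_def a5 a6 by simp
  consider "q = []" | y q2 where "q = y#q2" "y \<noteq> x" | "q = [x]" | y q3 where "q = x#y#q3" "y \<noteq> x"
    | q4 where "q = x#x#q4"
  proof (cases q)
    case (Cons y q2)
    show ?thesis
    proof (cases "y = x")
      case True
      show ?thesis
      proof (cases q2)
        case (Cons y2 q3)
        then show ?thesis using that \<open>q = y#q2\<close> True by (cases "y2 = x") auto
      qed (use that Cons True in auto)
    qed (use that Cons in auto)
  qed (use that in auto)
  then show ?thesis
  proof cases
    case 1
    have "g1 x q = 1" using 1 by (simp add: g1_def fl_def rs_Nil)
    moreover have "el x q = []" using 1 by (simp add: el_def rs_Nil)
    moreover have "fcf x q N = sb (M - 2) 1" using 1 by (simp add: fcf_def e1cf_def g1_def rs_Nil fl_def M_def)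
    ultimately show ?thesis using 1 unfolding lhs rhs by (simp add: rs_single lastb_def)
  next
    case 2
    have rq: "run_sizes (x#q) = 1 # run_sizes q" using 2 by (simp add: rs_diff)
    have ne: "run_sizes q \<noteq> []" using 2 by (simp add: rs_ne)
    have elq: "el x q = run_sizes q" using 2 by (simp add: el_def fl_def)
    have f: "fcf x q N = sb (M - 2) (g1 x q)" using 2 by (simp add: fcf_def e1cf_def M_def)
    show ?thesis unfolding lhs rhs f elq rq using ne by (simp add: lastb_def)
  next
    case 3
    have r: "run_sizes (x#q) = [2]" using 3 by (simp add: rs_same rs_single)
    have g3: "g1 x q = 2" using 3 by (simp add: g1_def fl_def rs_single)
    have elq: "el x q = []" using 3 by (simp add: el_def fl_def rs_single)
    have f: "fcf x q N = sb (M - 1) 2" using 3 by (simp add: fcf_def e1cf_def g1_def fl_def rs_single M_def numeral_2_eq_2)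
    show ?thesis unfolding lhs rhs f elq r g3 by (simp add: lastb_def)
  next
    case 4
    define T where "T = run_sizes (y#q3)"
    have T: "T \<noteq> []" by (simp add: T_def rs_ne)
    have r1: "run_sizes q = 1 # T" using 4 by (simp add: rs_diff T_def)
    have r2: "run_sizes (x#q) = 2 # T" using 4 r1 by (simp add: rs_same)
    have elq: "el x q = T" using 4 r1 by (simp add: el_def fl_def)
    have gq: "g1 x q = Suc (g1 x (y#q3))" using 4 by (simp add: g1_Cons)
    have f: "fcf x q N = sb (M - 1) (g1 x (y#q3))" using 4
      by (simp add: fcf_def e1cf_def M_def algebra_simps)
    show ?thesis unfolding lhs rhs f elq r2 gq using T by (simp add: lastb_def)
  next
    case 5
    obtain s0 T where r0: "run_sizes (x#q4) = s0 # T" using rs_ne[of "x#q4"] by (cases "run_sizes (x#q4)") auto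
    have s0: "s0 \<noteq> 0" using rs_pos[of "x#q4"] r0 by auto
    have r1: "run_sizes q = Suc s0 # T" using 5 r0 by (simp add: rs_same)
    have r2: "run_sizes (x#q) = Suc (Suc s0) # T" using 5 r1 by (simp add: rs_same)
    have elq: "el x q = T" using 5 r1 by (simp add: el_def fl_def)
    have f: "fcf x q N = 0" using 5 by (simp add: fcf_def)
    show ?thesis unfolding lhs rhs f elq r2 using s0 by (simp add: lastb_def)
  qed
qed




definition bnd :: "nat list \<Rightarrow> nat" where
  "bnd rs = (if rs \<noteq> [] \<and> hd rs = 2 then 1 else 0) + (if length rs \<ge> 2 \<and> last rs = 2 then 1 else 0)"

definition Ncf :: "bool list \<Rightarrow> int \<Rightarrow> nat" where
  "Ncf p N = (let rs = run_sizes p; l = int (length p); g = length p - length rs + 2 in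
     count_list rs 1 * sb (N - l - 2) g + count_list (butlast (tl rs)) 2 * sb (N - l - 1) (g - 1)
     + bnd rs * sb (N - l - 1) g)"

definition gcf :: "bool \<Rightarrow> bool list \<Rightarrow> int \<Rightarrow> nat" where
  "gcf x X N = (if X = [] \<or> hd X \<noteq> x then e1cf x X (N - 2)
     else if hd (tl X) \<noteq> x then sb (N - int (length X) - 1) (g1 x X) else 0)"

lemma gtop: "length (x#X) - length (run_sizes (x#X)) + 2 = Suc (g1 x X)"
proof -
  have "g1 x (x#X) = Suc (g1 x X)" by (simp add: g1_Cons)
  moreover have "g1 x (x#X) = length (x#X) - length (run_sizes (x#X)) + 2"
    by (simp add: g1_def fl_def)
  ultimately show ?thesis by simp
qed

lemma Ncf_rec:
  assumes "length X \<ge> 2"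
  shows "Ncf (x#X) (N+1) = Ncf (x#X) N + e3cf x X N + gcf x X N"
proof -
  obtain h where h: "g1 x X = Suc h" using g1_pos[of x X] by (cases "g1 x X") auto
  define G where "G = g1 x X"
  define M where "M = N - int (length X)"
  define rs where "rs = run_sizes (x#X)"
  have p1: "sb (M - 2) (Suc G) = sb (M - 2) G + sb (M - 3) (Suc G)"
    using sb_pascal[of "M - 2" G] by (simp add: algebra_simps)
  have p2: "sb (M - 1) G = sb (M - 1) (G - 1) + sb (M - 2) G"
    using sb_pascal[of "M - 1" h] by (simp add: algebra_simps G_def h)
  have p3: "sb (M - 1) (Suc G) = sb (M - 1) G + sb (M - 2) (Suc G)"
    using sb_pascal[of "M - 1" G] by (simp add: algebra_simps)
  have a1: "N + 1 - int (length (x#X)) - 2 = M - 2" by (simp add: M_def)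
  have a2: "N + 1 - int (length (x#X)) - 1 = M - 1" by (simp add: M_def)
  have a3: "N - int (length (x#X)) - 2 = M - 3" by (simp add: M_def)
  have a4: "N - int (length (x#X)) - 1 = M - 2" by (simp add: M_def)
  have a5: "N - int (length X) - 2 = M - 2" by (simp add: M_def)
  have a6: "N - int (length X) - 1 = M - 1" by (simp add: M_def)
  have gt: "length (x#X) - length rs + 2 = Suc G" unfolding rs_def G_def by (rule gtop)
  have n1: "Ncf (x#X) (N+1) = count_list rs 1 * sb (M - 2) (Suc G)
     + count_list (butlast (tl rs)) 2 * sb (M - 1) G + bnd rs * sb (M - 1) (Suc G)"
    unfolding Ncf_def Let_def rs_def[symmetric] gt a1 a2 by simp
  have n0: "Ncf (x#X) N = count_list rs 1 * sb (M - 3) (Suc G)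
     + count_list (butlast (tl rs)) 2 * sb (M - 2) G + bnd rs * sb (M - 2) (Suc G)"
    unfolding Ncf_def Let_def rs_def[symmetric] gt a3 a4 by simp
  have e3: "e3cf x X N = count_list (el x X) 1 * sb (M - 2) G
     + count_list (butlast (el x X)) 2 * sb (M - 1) (G - 1)
     + lastb (el x X) * sb (M - 1) G"
    unfolding e3cf_def a5 a6 G_def by simp
  consider y X' where "X = y#X'" "y \<noteq> x" "X' \<noteq> []" | y X3 where "X = x#y#X3" "y \<noteq> x"
    | X4 where "X = x#x#X4"
  proof (cases X)
    case Nil then show ?thesis using assms by simp
  next
    case (Cons y X2)
    show ?thesis
    proof (cases "y = x")
      case True
      show ?thesis
      proof (cases X2)
        case (Cons y2 q3)
        then show ?thesis using that \<open>X = y#X2\<close> True by (cases "y2 = x") auto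
      qed (use assms Cons True in auto)
    next
      case False
      have "X2 \<noteq> []" using assms Cons by auto
      then show ?thesis using that(1)[of y X2] Cons False by auto
    qed
  qed
  then show ?thesis
  proof cases
    case 1
    have r: "rs = 1 # run_sizes X" using 1 by (simp add: rs_def rs_diff)
    have ne: "run_sizes X \<noteq> []" using 1 by (simp add: rs_ne)
    have elq: "el x X = run_sizes X" using 1 by (simp add: el_def fl_def)
    have f: "gcf x X N = sb (M - 2) G" using 1 by (simp add: gcf_def e1cf_def M_def G_def)
    have b: "bnd rs = lastb (run_sizes X)" using ne r
      by (cases "run_sizes X") (auto simp: bnd_def lastb_def)
    have bl: "butlast (tl rs) = butlast (run_sizes X)" using r by simp
    show ?thesis unfolding n1 n0 e3 f elq b bl
      by (simp only: p1 p2 p3 r count_list.simps) (simp add: algebra_simps)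
  next
    case 2
    define T where "T = run_sizes (y#X3)"
    have T: "T \<noteq> []" by (simp add: T_def rs_ne)
    have r1: "run_sizes X = 1 # T" using 2 by (simp add: rs_diff T_def)
    have r: "rs = 2 # T" using 2 r1 by (simp add: rs_def rs_same)
    have elq: "el x X = T" using 2 r1 by (simp add: el_def fl_def)
    have f: "gcf x X N = sb (M - 1) G" using 2 by (simp add: gcf_def M_def G_def)
    have b: "bnd rs = 1 + lastb T" using T r
      by (cases T) (auto simp: bnd_def lastb_def)
    have bl: "butlast (tl rs) = butlast T" using r by simp
    have c1: "count_list rs 1 = count_list T 1" using r by simp
    show ?thesis unfolding n1 n0 e3 f elq b bl c1
      by (simp only: p1 p2 p3) (simp add: algebra_simps)
  next
    case 3
    obtain s0 T where r0: "run_sizes (x#X4) = s0 # T" using rs_ne[of "x#X4"] by (cases "run_sizes (x#X4)") auto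
    have s0: "s0 \<noteq> 0" using rs_pos[of "x#X4"] r0 by auto
    have r1: "run_sizes X = Suc s0 # T" using 3 r0 by (simp add: rs_same)
    have r: "rs = Suc (Suc s0) # T" using 3 r1 by (simp add: rs_def rs_same)
    have elq: "el x X = T" using 3 r1 by (simp add: el_def fl_def)
    have f: "gcf x X N = 0" using 3 by (simp add: gcf_def)
    have b: "bnd rs = lastb T" using s0 r
      by (cases T) (auto simp: bnd_def lastb_def)
    have bl: "butlast (tl rs) = butlast T" using r by simp
    have c1: "count_list rs 1 = count_list T 1" using r s0 by simp
    show ?thesis unfolding n1 n0 e3 f elq b bl c1
      by (simp only: p1 p2 p3) (simp add: algebra_simps)
  qed
qed




definition Ek :: "nat \<Rightarrow> bool \<Rightarrow> bool list \<Rightarrow> bool list \<Rightarrow> bool" where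
  "Ek k c q w = (oc q w = k \<and> oc (c#q) w = 0)"

definition Fp :: "bool \<Rightarrow> bool list \<Rightarrow> bool list \<Rightarrow> bool" where
  "Fp x q w = (1 \<le> oc (x#q) w \<and> oc (x#q) w + oc q w = 3 \<and> oc ((\<not>x)#x#q) w = 0)"

definition H :: "bool \<Rightarrow> bool list \<Rightarrow> bool list \<Rightarrow> bool" where
  "H x q w = (oc (x#q) w = 1 \<and> oc q w = 1 \<and> oc ((\<not>x)#x#q) w = 0)"

definition H3 :: "bool \<Rightarrow> bool list \<Rightarrow> bool list \<Rightarrow> bool" where
  "H3 x q w = (oc (x#x#q) w = 0 \<and> oc (x#q) w = 1 \<and> oc q w = 1)"

definition Gs :: "bool \<Rightarrow> bool list \<Rightarrow> bool list \<Rightarrow> bool" where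
  "Gs x X w = (1 \<le> oc (x#X) w \<and> oc (x#X) w + oc X w = 3)"

definition H' :: "bool \<Rightarrow> bool list \<Rightarrow> bool list \<Rightarrow> bool" where
  "H' x X w = (oc (x#X) w = 1 \<and> oc X w = 1)"

lemma oc_skip: "q = [] \<or> hd q \<noteq> y \<Longrightarrow> oc q (y#w) = oc q w"
  by (cases q) auto

lemma pt: "oc (x#X) w = 0 \<or> 0 < oc X w"
proof (cases "oc (x#X) w = 0")
  case False then show ?thesis using oc_pos_tl[of x X w] by simp
qed simp

lemma pt2: "oc (x#x#X) w = 0 \<or> 2 \<le> oc (x#X) w"
proof (cases "oc (x#x#X) w = 0")
  case False then show ?thesis using oc_two0[of x X w] by simp
qed simp

lemma E_x_eq: "Ek k x (x#q) (x#w) = Ek k x q w"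
  using pt[of x "x#q" w] by (auto simp: Ek_def; presburger)

lemma E_x_ne1: "Ek (Suc 0) (\<not>x) (x#q) (x#w) = Ek (Suc 0) x q w"
  using pt[of "\<not>x" "x#q" w] pt[of x q w] by (auto simp: Ek_def; presburger)

lemma E_x_ne3: "Ek 3 (\<not>x) (x#q) (x#w) = (Ek 3 x q w \<or> Fp x q w)"
  using pt[of "\<not>x" "x#q" w] pt[of x q w] by (auto simp: Ek_def Fp_def; presburger)

lemma E_x_ne3_disj: "\<not> (Ek 3 x q w \<and> Fp x q w)"
  by (auto simp: Ek_def Fp_def; presburger)

lemma E_nx_eq: "Ek k x (x#q) ((\<not>x)#w) = Ek k x (x#q) w"
  by (simp add: Ek_def)

lemma E_nx_ne: "k \<ge> 1 \<Longrightarrow> Ek k (\<not>x) (x#q) ((\<not>x)#w) = False"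
  by (auto simp: Ek_def; presburger)

lemma E_nil1: "Ek (Suc 0) c [] (y#w) = (y \<noteq> c \<and> Ek (Suc 0) c [] w)"
  by (auto simp: Ek_def; presburger)

lemma E_nil3: "Ek 3 c [] w = False"
  by (simp add: Ek_def)

lemma E_base: "k \<ge> 1 \<Longrightarrow> Ek k c q [] = (k = 1 \<and> q = [])"
  by (cases q) (auto simp: Ek_def)

lemma F_base: "Fp x q [] = False" by (simp add: Fp_def)
lemma H_base: "H x q [] = False" by (simp add: H_def)
lemma H3_base: "q \<noteq> [] \<Longrightarrow> H3 x q [] = False" by (simp add: H3_def oc_Nil_w)
lemma Gs_base: "Gs x X [] = False" by (simp add: Gs_def)
lemma H'_base: "H' x X [] = False" by (simp add: H'_def)

lemma F_nx: "Fp x q ((\<not>x)#w) = False"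
  by (auto simp: Fp_def; presburger)

lemma F1a: assumes "q = [] \<or> hd q \<noteq> x" shows "Fp x q (x#w) = H x q w"
  using pt[of x q w] by (auto simp: Fp_def H_def oc_skip[OF assms]; presburger)

lemma Ha: assumes "q = [] \<or> hd q \<noteq> x" shows "H x q (x#w) = Ek (Suc 0) x q w"
  using pt[of x q w] pt[of "\<not>x" "x#q" w] by (auto simp: H_def Ek_def oc_skip[OF assms]; presburger)

lemma Hb: "H x q ((\<not>x)#w) = False"
  by (auto simp: H_def; presburger)

lemma F2a: "Fp x [x] (x#w) = Ek (Suc 0) x [x] w"
  using pt[of x "[x]" w] pt[of "\<not>x" "[x,x]" w] by (auto simp: Fp_def Ek_def; presburger)

lemma F3a: assumes "q2 \<noteq> []" "hd q2 \<noteq> x" shows "Fp x (x#q2) (x#w) = H3 x q2 w"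
proof -
  have s: "oc q2 (x#w) = oc q2 w" using assms by (simp add: oc_skip)
  have t1: "oc (x#x#q2) w = 0 \<or> 2 \<le> oc (x#q2) w" by (rule pt2)
  show ?thesis using pt[of x q2 w] pt[of "\<not>x" "x#x#q2" w] t1
    by (auto simp: Fp_def H3_def s; presburger)
qed

lemma H3a: assumes "q2 \<noteq> []" "hd q2 \<noteq> x" shows "H3 x q2 (x#w) = Ek (Suc 0) x q2 w"
proof -
  have s: "oc q2 (x#w) = oc q2 w" using assms by (simp add: oc_skip)
  show ?thesis using pt[of x q2 w] pt[of x "x#q2" w]
    by (auto simp: H3_def Ek_def s; presburger)
qed

lemma H3b: "H3 x ((\<not>x)#q3) ((\<not>x)#w) = False"
  using pt[of x "(\<not>x)#q3" w] pt[of "\<not>x" q3 w] by (auto simp: H3_def; presburger)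

lemma F4a: "Fp x (x#x#q4) (x#w) = False"
  using pt2[of x "x#q4" w] pt2[of x q4 w] by (auto simp: Fp_def; presburger)

lemma G1a: "Gs x ((\<not>x)#X') (x#w) = H' x ((\<not>x)#X') w"
  using pt[of x "(\<not>x)#X'" w] by (auto simp: Gs_def H'_def; presburger)

lemma G1b: assumes "X' \<noteq> []" shows "Gs x ((\<not>x)#X') ((\<not>x)#w) = False"
proof -
  obtain y X2 where X': "X' = y#X2" using assms by (cases X') auto
  have a: "oc (x#(\<not>x)#X') w = 0 \<or> 0 < oc ((\<not>x)#X') w" by (rule pt)
  have b: "oc ((\<not>x)#X') w = 0 \<or> 0 < oc X' w" by (rule pt)
  have c: "oc X' w \<ge> 2 \<or> oc (x#(\<not>x)#X') w = 0 \<or> oc ((\<not>x)#X') w = 0"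
  proof (cases "y = x")
    case True
    then show ?thesis using oc_two[of x "[\<not>x]" X2 w] X' by auto
  next
    case False
    then have "y = (\<not>x)" by simp
    then show ?thesis using oc_two0[of "\<not>x" X2 w] X' by auto
  qed
  show ?thesis using a b c by (auto simp: Gs_def; presburger)
qed

lemma H'a: "H' x ((\<not>x)#X') (x#w) = Ek (Suc 0) x ((\<not>x)#X') w"
  by (auto simp: H'_def Ek_def; presburger)

lemma H'b: "H' x ((\<not>x)#X') ((\<not>x)#w) = False"
  using pt[of x "(\<not>x)#X'" w] pt[of "\<not>x" X' w] by (auto simp: H'_def; presburger)

lemma G2a: assumes "q2 \<noteq> []" "hd q2 \<noteq> x" shows "Gs x (x#q2) (x#w) = H3 x q2 w"
proof -
  have s: "oc q2 (x#w) = oc q2 w" using assms by (simp add: oc_skip)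
  have t1: "oc (x#x#q2) w = 0 \<or> 2 \<le> oc (x#q2) w" by (rule pt2)
  show ?thesis using pt[of x q2 w] t1
    by (auto simp: Gs_def H3_def s; presburger)
qed

lemma G_nx: "Gs x (x#q) ((\<not>x)#w) = Gs x (x#q) w"
  by (simp add: Gs_def)

lemma G4a: "Gs x (x#x#q4) (x#w) = False"
  using pt2[of x "x#q4" w] pt2[of x q4 w] by (auto simp: Gs_def; presburger)




lemma bool_ne: "(c::bool) \<noteq> x \<Longrightarrow> c = (\<not>x)" by auto

lemma sb1: "N \<ge> 0 \<Longrightarrow> sb N 1 = 1" by (simp add: sb_def)

lemma e1cf_neg: "N < 0 \<Longrightarrow> e1cf c q N = 0" by (simp add: e1cf_def sb_def)

lemma cnt_E1: "cnt n (Ek (Suc 0) c q) = e1cf c q (int n)"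
proof (induction n arbitrary: c q)
  case 0
  show ?case
  proof (cases q)
    case Nil then show ?thesis by (simp add: cnt_0 E_base e1cf_def g1_def fl_def rs_Nil sb_def)
  next
    case (Cons a list) then show ?thesis by (simp add: cnt_0 E_base e1cf_def sb_def)
  qed
next
  case (Suc m)
  show ?case
  proof (cases q)
    case Nil
    have "cnt (Suc m) (Ek (Suc 0) c q) = cnt m (\<lambda>w. Ek (Suc 0) c [] (c#w)) + cnt m (\<lambda>w. Ek (Suc 0) c [] ((\<not>c)#w))"
      using Nil cnt_Suc by blast
    also have "\<dots> = cnt m (Ek (Suc 0) c [])" by (simp add: E_nil1 cnt_False)
    also have "\<dots> = 1" using Suc.IH by (simp add: e1cf_def g1_def fl_def rs_Nil sb_def)
    finally show ?thesis using Nil by (simp add: e1cf_def g1_def fl_def rs_Nil sb_def)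
  next
    case (Cons x q')
    have "cnt (Suc m) (Ek (Suc 0) c q) = cnt m (\<lambda>w. Ek (Suc 0) c (x#q') (x#w)) + cnt m (\<lambda>w. Ek (Suc 0) c (x#q') ((\<not>x)#w))"
      using Cons cnt_Suc by blast
    also have "\<dots> = e1cf x q' (int m) + (if c = x then e1cf c (x#q') (int m) else 0)"
    proof (cases "c = x")
      case True
      then show ?thesis using Suc.IH by (simp add: E_x_eq E_nx_eq)
    next
      case False
      then have c: "c = (\<not>x)" by (rule bool_ne)
      show ?thesis using Suc.IH False unfolding c by (simp add: E_x_ne1 E_nx_ne cnt_False)
    qed
    also have "\<dots> = e1cf c (x#q') (int m + 1)" by (rule e1cf_rec[symmetric])
    finally show ?thesis using Cons by (simp add: add.commute)
  qed
qed

lemma cnt_H: assumes "q = [] \<or> hd q \<noteq> x" shows "cnt n (H x q) = e1cf x q (int n - 1)"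
proof (cases n)
  case 0 then show ?thesis by (simp add: cnt_0 H_base e1cf_neg)
next
  case (Suc m)
  have "cnt n (H x q) = cnt m (\<lambda>w. H x q (x#w)) + cnt m (\<lambda>w. H x q ((\<not>x)#w))"
    using Suc cnt_Suc by blast
  also have "\<dots> = cnt m (Ek (Suc 0) x q)" by (simp add: Ha[OF assms] Hb cnt_False)
  finally show ?thesis using Suc by (simp add: cnt_E1)
qed

lemma cnt_H3: assumes "q2 \<noteq> []" "hd q2 \<noteq> x" shows "cnt n (H3 x q2) = e1cf x q2 (int n - 1)"
proof (cases n)
  case 0 then show ?thesis using assms by (simp add: cnt_0 H3_base e1cf_neg)
next
  case (Suc m)
  obtain q3 where q2: "q2 = (\<not>x)#q3" using assms by (cases q2) auto
  have "cnt n (H3 x q2) = cnt m (\<lambda>w. H3 x q2 (x#w)) + cnt m (\<lambda>w. H3 x q2 ((\<not>x)#w))"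
    using Suc cnt_Suc by blast
  also have "\<dots> = cnt m (Ek (Suc 0) x q2)"
  proof -
    have "cnt m (\<lambda>w. H3 x q2 (x#w)) = cnt m (Ek (Suc 0) x q2)" by (simp add: H3a[OF assms])
    moreover have "cnt m (\<lambda>w. H3 x q2 ((\<not>x)#w)) = 0" using H3b[of x q3] by (simp add: q2 cnt_False)
    ultimately show ?thesis by simp
  qed
  finally show ?thesis using Suc by (simp add: cnt_E1)
qed

lemma cnt_F: "cnt n (Fp x q) = fcf x q (int n)"
proof (cases n)
  case 0
  then show ?thesis by (simp add: cnt_0 F_base fcf_def e1cf_neg)
next
  case (Suc m)
  have s: "cnt n (Fp x q) = cnt m (\<lambda>w. Fp x q (x#w)) + cnt m (\<lambda>w. Fp x q ((\<not>x)#w))"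
    using Suc cnt_Suc by blast
  also have "\<dots> = cnt m (\<lambda>w. Fp x q (x#w))" by (simp add: F_nx cnt_False)
  finally have s2: "cnt n (Fp x q) = cnt m (\<lambda>w. Fp x q (x#w))" .
  consider "q = [] \<or> hd q \<noteq> x" | "q = [x]" | q2 where "q = x#q2" "q2 \<noteq> []" "hd q2 \<noteq> x"
    | q4 where "q = x#x#q4"
  proof (cases q)
    case (Cons y q2)
    show ?thesis
    proof (cases "y = x")
      case True
      show ?thesis
      proof (cases q2)
        case (Cons y2 q3)
        then show ?thesis using that \<open>q = y#q2\<close> True by (cases "y2 = x") auto
      qed (use that Cons True in auto)
    qed (use that Cons in auto)
  qed (use that in auto)
  then show ?thesis
  proof cases
    case 1
    then show ?thesis using s2 Suc by (simp add: F1a cnt_H fcf_def)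
  next
    case 2
    then show ?thesis using s2 Suc by (simp add: F2a cnt_E1 fcf_def)
  next
    case 3
    then show ?thesis using s2 Suc by (simp add: F3a cnt_H3 fcf_def)
  next
    case 4
    then show ?thesis using s2 Suc by (simp add: F4a cnt_False fcf_def)
  qed
qed

lemma cnt_E3: "cnt n (Ek 3 c q) = e3cf c q (int n)"
proof (induction n arbitrary: c q)
  case 0
  show ?case by (simp add: cnt_0 E_base e3cf_def sb_def)
next
  case (Suc m)
  show ?case
  proof (cases q)
    case Nil
    then show ?thesis by (simp add: E_nil3 cnt_False e3cf_def el_def fl_def rs_Nil lastb_def)
  next
    case (Cons x q')
    have "cnt (Suc m) (Ek 3 c q) = cnt m (\<lambda>w. Ek 3 c (x#q') (x#w)) + cnt m (\<lambda>w. Ek 3 c (x#q') ((\<not>x)#w))"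
      using Cons cnt_Suc by blast
    also have "\<dots> = e3cf c (x#q') (int m + 1)"
    proof (cases "c = x")
      case True
      then show ?thesis using Suc.IH by (simp add: E_x_eq E_nx_eq e3cf_same)
    next
      case False
      then have c: "c = (\<not>x)" by (rule bool_ne)
      have "cnt m (\<lambda>w. Ek 3 x q' w \<or> Fp x q' w) = cnt m (Ek 3 x q') + cnt m (Fp x q')"
        by (rule cnt_disj) (rule E_x_ne3_disj)
      then show ?thesis using Suc.IH False unfolding c
        by (simp add: E_x_ne3 E_nx_ne cnt_False cnt_F e3cf_diff)
    qed
    finally show ?thesis using Cons by (simp add: add.commute)
  qed
qed

lemma cnt_G: assumes "length X \<ge> 2" shows "cnt n (Gs x X) = gcf x X (int n)"
proof -
  consider X' where "X = (\<not>x)#X'" "X' \<noteq> []" | q3 where "X = x#(\<not>x)#q3" | X4 where "X = x#x#X4"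
  proof (cases X)
    case Nil then show ?thesis using assms by simp
  next
    case (Cons y X2)
    have X2: "X2 \<noteq> []" using assms Cons by auto
    show ?thesis
    proof (cases "y = x")
      case True
      then obtain y2 q3 where "X2 = y2 # q3" using X2 by (cases X2) auto
      then show ?thesis using that Cons True by (cases "y2 = x") auto
    next
      case False
      then show ?thesis using that(1)[of X2] Cons X2 by auto
    qed
  qed
  then show ?thesis
  proof cases
    case 1
    have hh: "cnt k (H' x X) = e1cf x X (int k - 1)" for k
    proof (cases k)
      case 0 then show ?thesis by (simp add: cnt_0 H'_base e1cf_neg)
    next
      case (Suc m)
      have "cnt k (H' x X) = cnt m (\<lambda>w. H' x X (x#w)) + cnt m (\<lambda>w. H' x X ((\<not>x)#w))"
        using Suc cnt_Suc by blast
      then show ?thesis using Suc 1 by (simp add: H'a H'b cnt_False cnt_E1)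
    qed
    show ?thesis
    proof (cases n)
      case 0 then show ?thesis using 1 by (simp add: cnt_0 Gs_base gcf_def e1cf_neg)
    next
      case (Suc m)
      have "cnt n (Gs x X) = cnt m (\<lambda>w. Gs x X (x#w)) + cnt m (\<lambda>w. Gs x X ((\<not>x)#w))"
        using Suc cnt_Suc by blast
      moreover have "cnt m (\<lambda>w. Gs x X (x#w)) = cnt m (H' x X)" using 1 by (simp add: G1a)
      moreover have "cnt m (\<lambda>w. Gs x X ((\<not>x)#w)) = 0" using 1 G1b[of X' x] by (simp add: cnt_False)
      moreover have "int n - 2 = int m - 1" using Suc by simp
      ultimately show ?thesis using 1 hh[of m] by (simp add: gcf_def)
    qed
  next
    case 2
    define q2 where "q2 = (\<not>x)#q3"
    have X: "X = x#q2" using 2 by (simp add: q2_def)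
    have q2a: "q2 \<noteq> []" "hd q2 \<noteq> x" by (auto simp: q2_def)
    have gX: "g1 x X = Suc (g1 x q2)" using X by (simp add: g1_Cons)
    have "cnt n (Gs x X) = sb (int n - int (length X) - 1) (g1 x X)"
    proof (induction n)
      case 0 then show ?case by (simp add: cnt_0 Gs_base sb_def)
    next
      case (Suc m)
      have "cnt (Suc m) (Gs x X) = cnt m (\<lambda>w. Gs x X (x#w)) + cnt m (\<lambda>w. Gs x X ((\<not>x)#w))"
        using cnt_Suc by blast
      also have "\<dots> = cnt m (H3 x q2) + cnt m (Gs x X)"
        unfolding X G2a[OF q2a] G_nx by simp
      also have "\<dots> = sb (int m - int (length q2) - 1) (g1 x q2) + sb (int m - int (length X) - 1) (g1 x X)"
        using Suc.IH by (simp add: cnt_H3[OF q2a] e1cf_def algebra_simps)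
      also have "\<dots> = sb (int (Suc m) - int (length X) - 1) (g1 x X)"
        unfolding gX using sb_pascal[of "int m - int (length q2) - 1" "g1 x q2"]
        by (simp add: X algebra_simps)
      finally show ?case .
    qed
    then show ?thesis using X q2a by (simp add: gcf_def q2_def)
  next
    case 3
    have "cnt n (Gs x X) = 0"
    proof (induction n)
      case 0 then show ?case by (simp add: cnt_0 Gs_base)
    next
      case (Suc m)
      have "cnt (Suc m) (Gs x X) = cnt m (\<lambda>w. Gs x X (x#w)) + cnt m (\<lambda>w. Gs x X ((\<not>x)#w))"
        using cnt_Suc by blast
      then show ?case using Suc.IH 3 by (simp add: G4a G_nx cnt_False)
    qed
    then show ?thesis using 3 by (simp add: gcf_def)
  qed
qed

lemma top_step: "(oc (x#X) (x#w) = 3) = (Ek 3 x X w \<or> Gs x X w)"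
  by (auto simp: Ek_def Gs_def)

lemma top_disj: "\<not> (Ek 3 x X w \<and> Gs x X w)"
  by (auto simp: Ek_def Gs_def)

lemma cnt_top: assumes "length X \<ge> 2" shows "cnt n (\<lambda>w. oc (x#X) w = 3) = Ncf (x#X) (int n)"
proof (induction n)
  case 0
  then show ?case using assms by (simp add: cnt_0 Ncf_def Let_def sb_def)
next
  case (Suc m)
  have "cnt (Suc m) (\<lambda>w. oc (x#X) w = 3) = cnt m (\<lambda>w. oc (x#X) (x#w) = 3) + cnt m (\<lambda>w. oc (x#X) ((\<not>x)#w) = 3)"
    using cnt_Suc by blast
  also have "\<dots> = cnt m (Ek 3 x X) + cnt m (Gs x X) + cnt m (\<lambda>w. oc (x#X) w = 3)"
    unfolding top_step using cnt_disj[of "Ek 3 x X" "Gs x X" m, OF top_disj] by simp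
  also have "\<dots> = Ncf (x#X) (int m + 1)"
    using Suc.IH by (simp add: cnt_E3 cnt_G[OF assms] Ncf_rec[OF assms])
  finally show ?case by (simp add: add.commute)
qed




lemma Bnp_cnt: "Bnp n p k = cnt n (\<lambda>w. oc p w = k)"
  by (simp add: Bnp_def cnt_def occ_eq_oc)

lemma ros_count: "runs_of_size p i = count_list (run_sizes p) i"
  unfolding runs_of_size_def count_list_eq_length_filter length_filter_conv_card
  by (rule arg_cong[where f=card]) auto

lemma r2b_bnd: "runs2_boundary p = bnd (run_sizes p)"
proof -
  define rs where "rs = run_sizes p"
  have "runs2_boundary p = card {j. j < length rs \<and> (j = 0 \<or> j = length rs - 1) \<and> rs ! j = 2}"
    by (simp add: runs2_boundary_def rs_def)
  also have "\<dots> = bnd rs"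
  proof (cases rs)
    case Nil then show ?thesis by (simp add: bnd_def)
  next
    case (Cons a t)
    show ?thesis
    proof (cases t)
      case Nil
      have "{j. j < length rs \<and> (j = 0 \<or> j = length rs - 1) \<and> rs ! j = 2} = (if a = 2 then {0} else {})"
        using Cons Nil by auto
      then show ?thesis using Cons Nil by (simp add: bnd_def)
    next
      case (Cons b t2)
      have l: "length rs \<ge> 2" using Cons \<open>rs = a#t\<close> by simp
      have "last rs = rs ! (length rs - 1)" by (rule last_conv_nth) (use l in auto)
      then have lst: "rs ! (length rs - 1) = last rs" by simp
      have "{j. j < length rs \<and> (j = 0 \<or> j = length rs - 1) \<and> rs ! j = 2} =
          (if a = 2 then {0} else {}) \<union> (if last rs = 2 then {length rs - 1} else {})"
        using l lst \<open>rs = a#t\<close> by (auto simp: nth_Cons')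
      moreover have "0 \<noteq> length rs - 1" using l by simp
      ultimately show ?thesis using l \<open>rs = a#t\<close> by (auto simp: bnd_def)
    qed
  qed
  finally show ?thesis by (simp add: rs_def)
qed

lemma count2_split: "count_list rs 2 = count_list (butlast (tl rs)) 2 + bnd rs"
proof (cases rs)
  case Nil then show ?thesis by (simp add: bnd_def)
next
  case (Cons a t)
  show ?thesis
  proof (cases t)
    case Nil then show ?thesis using Cons by (simp add: bnd_def)
  next
    case (Cons b t2)
    have "t = butlast t @ [last t]" using Cons by simp
    then have "count_list t 2 = count_list (butlast t @ [last t]) 2" by simp
    also have "\<dots> = count_list (butlast t) 2 + (if last t = 2 then 1 else 0)" by simp
    finally have "count_list t 2 = count_list (butlast t) 2 + (if last t = 2 then 1 else 0)" .
    then show ?thesis using Cons \<open>rs = a#t\<close> by (simp add: bnd_def)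
  qed
qed

lemma sb_binom: assumes "g \<ge> 1" shows "sb N g = binom (N + int g - 1) (int g - 1)"
proof (cases "N < 0")
  case True then show ?thesis using assms by (simp add: sb_def binom_def)
next
  case False
  have a: "nat (N + int g - 1) = nat N + g - 1" using False assms by linarith
  have b: "nat (int g - 1) = g - 1" using assms by linarith
  show ?thesis using False assms by (simp add: sb_def binom_def a b)
qed

theorem big:
  assumes "length p \<ge> 3"
  shows "Bnp n p 3 = runs_of_size p 1 * binom (int n - int (length (runs p)) - 1) (int (length p) - int (length (runs p)) + 1)
          + (runs_of_size p 2 - runs2_boundary p) * binom (int n - int (length (runs p)) - 1) (int (length p) - int (length (runs p)))
          + runs2_boundary p * binom (int n - int (length (runs p))) (int (length p) - int (length (runs p)) + 1)"
proof -
  obtain x X where p: "p = x#X" and X: "length X \<ge> 2" using assms by (cases p) auto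
  define rs where "rs = run_sizes p"
  define R where "R = length rs"
  have R: "length (runs p) = R" by (simp add: R_def rs_def run_sizes_def)
  have Rl: "R \<le> length p" using len_rs[of p] by (simp add: R_def rs_def)
  define l where "l = length p"
  define gg where "gg = l - R + 2"
  have ig: "int gg = int l - int R + 2" using Rl by (simp add: gg_def l_def)
  have s1: "sb (int n - int l - 2) gg = binom (int n - int R - 1) (int l - int R + 1)"
  proof -
    have "sb (int n - int l - 2) gg = binom (int n - int l - 2 + int gg - 1) (int gg - 1)"
      by (rule sb_binom) (simp add: gg_def)
    also have "int n - int l - 2 + int gg - 1 = int n - int R - 1" using ig by simp
    also have "int gg - 1 = int l - int R + 1" using ig by simp
    finally show ?thesis .
  qed
  have s2: "sb (int n - int l - 1) (gg - 1) = binom (int n - int R - 1) (int l - int R)"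
  proof -
    have i2: "int (gg - 1) = int l - int R + 1" using ig by (simp add: gg_def)
    have "sb (int n - int l - 1) (gg - 1) = binom (int n - int l - 1 + int (gg - 1) - 1) (int (gg - 1) - 1)"
      by (rule sb_binom) (simp add: gg_def)
    also have "int n - int l - 1 + int (gg - 1) - 1 = int n - int R - 1" using i2 by simp
    also have "int (gg - 1) - 1 = int l - int R" using i2 by simp
    finally show ?thesis .
  qed
  have s3: "sb (int n - int l - 1) gg = binom (int n - int R) (int l - int R + 1)"
  proof -
    have "sb (int n - int l - 1) gg = binom (int n - int l - 1 + int gg - 1) (int gg - 1)"
      by (rule sb_binom) (simp add: gg_def)
    also have "int n - int l - 1 + int gg - 1 = int n - int R" using ig by simp
    also have "int gg - 1 = int l - int R + 1" using ig by simp
    finally show ?thesis .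
  qed
  have "Bnp n p 3 = Ncf p (int n)" using cnt_top[OF X] p by (simp add: Bnp_cnt)
  also have "\<dots> = count_list rs 1 * sb (int n - int l - 2) gg
     + count_list (butlast (tl rs)) 2 * sb (int n - int l - 1) (gg - 1) + bnd rs * sb (int n - int l - 1) gg"
    unfolding Ncf_def Let_def rs_def[symmetric] R_def[symmetric] l_def[symmetric] gg_def[symmetric] ..
  also have "\<dots> = count_list rs 1 * binom (int n - int R - 1) (int l - int R + 1)
     + count_list (butlast (tl rs)) 2 * binom (int n - int R - 1) (int l - int R)
     + bnd rs * binom (int n - int R) (int l - int R + 1)"
    unfolding s1 s2 s3 ..
  also have "\<dots> = runs_of_size p 1 * binom (int n - int R - 1) (int l - int R + 1)
     + (runs_of_size p 2 - runs2_boundary p) * binom (int n - int R - 1) (int l - int R)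
     + runs2_boundary p * binom (int n - int R) (int l - int R + 1)"
    using count2_split[of rs] by (simp add: ros_count r2b_bnd rs_def[symmetric])
  finally show ?thesis unfolding R l_def .
qed

lemma oc1_cnt: "cnt n (\<lambda>w. oc [x] w = k) = n choose k"
proof (induction n arbitrary: k)
  case 0 then show ?case by (cases k) (simp_all add: cnt_0)
next
  case (Suc m)
  have "cnt (Suc m) (\<lambda>w. oc [x] w = k) = cnt m (\<lambda>w. oc [x] w + 1 = k) + cnt m (\<lambda>w. oc [x] w = k)"
    using cnt_Suc[of m "\<lambda>w. oc [x] w = k" x] by simp
  then show ?case
    using Suc.IH by (cases k) (simp_all add: cnt_False)
qed

lemma oc2: "oc [x,x] w = oc [x] w choose 2"
proof (induction w)
  case (Cons y w)
  then show ?case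
  proof (cases "y = x")
    case True
    have "Suc (oc [x] w) choose 2 = (oc [x] w choose 2) + oc [x] w"
      using binomial_Suc_Suc[of "oc [x] w" 1] by (simp add: eval_nat_numeral)
    then show ?thesis using Cons True by simp
  qed (use Cons in auto)
qed simp

lemma choose2_3: "(m::nat) choose 2 = 3 \<longleftrightarrow> m = 3"
proof
  assume a: "m choose 2 = 3"
  show "m = 3"
  proof (rule ccontr)
    assume "m \<noteq> 3"
    then consider "m \<le> 2" | "m \<ge> 4" by linarith
    then show False
    proof cases
      case 1
      then have "m = 0 \<or> m = 1 \<or> m = 2" by auto
      then show False using a by (auto simp: choose_two)
    next
      case 2
      have "m * (m - 1) \<ge> 4 * 3" using 2 by (intro mult_le_mono) auto
      then have "m * (m - 1) div 2 \<ge> 6" by auto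
      then show False using a by (simp add: choose_two)
    qed
  qed
qed (simp add: choose_two)

definition Rp :: "bool \<Rightarrow> nat \<Rightarrow> nat \<Rightarrow> bool list \<Rightarrow> bool" where
  "Rp x m k w = (oc [x, \<not>x] w + m * oc [\<not>x] w = k)"

lemma Rp_x: "Rp x m k (x#w) = Rp x (Suc m) k w" by (simp add: Rp_def algebra_simps)
lemma Rp_nx: "Rp x m k ((\<not>x)#w) = (m \<le> k \<and> Rp x m (k - m) w)" by (auto simp: Rp_def)
lemma Rp_nil: "Rp x m k [] = (k = 0)" by (simp add: Rp_def)

lemma Rp_step: "cnt (Suc j) (Rp x m k) = cnt j (Rp x (Suc m) k) + (if m \<le> k then cnt j (Rp x m (k - m)) else 0)"
  using cnt_Suc[of j "Rp x m k" x] by (simp add: Rp_x Rp_nx cnt_False)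

lemma Rp_zero: "m > k \<Longrightarrow> k \<ge> 1 \<Longrightarrow> cnt n (Rp x m k) = 0"
proof (induction n arbitrary: m)
  case 0 then show ?case by (simp add: cnt_0 Rp_nil)
next
  case (Suc j) then show ?case by (simp add: Rp_step)
qed

lemma Rp_one: "m \<ge> 1 \<Longrightarrow> cnt n (Rp x m 0) = 1"
proof (induction n arbitrary: m)
  case 0 then show ?case by (simp add: cnt_0 Rp_nil)
next
  case (Suc j) then show ?case by (simp add: Rp_step)
qed

lemma st1: "cnt (Suc j) (Rp x 3 3) = cnt j (Rp x 4 3) + cnt j (Rp x 3 0)" using Rp_step[of j x 3 3] by (simp add: eval_nat_numeral)
lemma st2: "cnt (Suc j) (Rp x 2 3) = cnt j (Rp x 3 3) + cnt j (Rp x 2 1)" using Rp_step[of j x 2 3] by (simp add: eval_nat_numeral)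
lemma st3: "cnt (Suc j) (Rp x 1 1) = cnt j (Rp x 2 1) + cnt j (Rp x 1 0)" using Rp_step[of j x 1 1] by (simp add: eval_nat_numeral)
lemma st4: "cnt (Suc j) (Rp x 2 2) = cnt j (Rp x 3 2) + cnt j (Rp x 2 0)" using Rp_step[of j x 2 2] by (simp add: eval_nat_numeral)
lemma st5: "cnt (Suc j) (Rp x 1 2) = cnt j (Rp x 2 2) + cnt j (Rp x 1 1)" using Rp_step[of j x 1 2] by (simp add: eval_nat_numeral)
lemma st6: "cnt (Suc j) (Rp x 1 3) = cnt j (Rp x 2 3) + cnt j (Rp x 1 2)" using Rp_step[of j x 1 3] by (simp add: eval_nat_numeral)
lemma st7: "cnt (Suc j) (Rp x 0 3) = cnt j (Rp x 1 3) + cnt j (Rp x 0 3)" using Rp_step[of j x 0 3] by (simp add: eval_nat_numeral)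

lemma z1: "cnt j (Rp x 4 3) = 0" by (rule Rp_zero) auto
lemma z2: "cnt j (Rp x 2 1) = 0" by (rule Rp_zero) auto
lemma z3: "cnt j (Rp x 3 2) = 0" by (rule Rp_zero) auto
lemma o1: "cnt j (Rp x 3 0) = 1" by (rule Rp_one) auto
lemma o2: "cnt j (Rp x 2 0) = 1" by (rule Rp_one) auto
lemma o3: "cnt j (Rp x 1 0) = 1" by (rule Rp_one) auto
lemma b0: "k \<noteq> 0 \<Longrightarrow> cnt 0 (Rp x m k) = 0" by (simp add: cnt_0 Rp_nil)

lemma pos1: "cnt n (Rp x 3 3) = (if n \<ge> 1 then 1 else 0)"
  by (cases n) (simp_all only: b0 st1 z1 o1, simp_all)
lemma pos2: "cnt n (Rp x 2 3) = (if n \<ge> 2 then 1 else 0)"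
  by (cases n) (simp_all only: b0 st2 z2 pos1, simp_all)
lemma pos3: "cnt n (Rp x 1 1) = (if n \<ge> 1 then 1 else 0)"
  by (cases n) (simp_all only: b0 st3 z2 o3, simp_all)
lemma pos4: "cnt n (Rp x 2 2) = (if n \<ge> 1 then 1 else 0)"
  by (cases n) (simp_all only: b0 st4 z3 o2, simp_all)
lemma pos5: "cnt n (Rp x 1 2) = (if n \<ge> 2 then 2 else 0)"
  by (cases n) (simp_all only: b0 st5 pos3 pos4, simp_all)
lemma pos6: "cnt n (Rp x 1 3) = (if n \<ge> 3 then 3 else 0)"
  by (cases n) (simp_all only: b0 st6 pos2 pos5, simp_all)
lemma pos7: "cnt n (Rp x 0 3) = 3 * (n - 3)"
proof (induction n)
  case 0 then show ?case by (simp add: b0)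
next
  case (Suc j)
  have "cnt (Suc j) (Rp x 0 3) = cnt j (Rp x 1 3) + cnt j (Rp x 0 3)" by (rule st7)
  then show ?case using Suc.IH pos6[of j x] by (cases "j \<ge> 3") auto
qed

lemma small2: "cnt n (\<lambda>w. oc [x, \<not>x] w = 3) = 3 * (n - 3)"
proof -
  have "Rp x 0 3 = (\<lambda>w. oc [x, \<not>x] w = 3)" by (rule ext) (simp add: Rp_def)
  then show ?thesis using pos7[of n x] by simp
qed




theorem mainTheorem5:
  fixes p :: "bool list" and n :: nat
  assumes "n \<ge> 3"
  defines "l \<equiv> int (length p)" and "r \<equiv> int (length (runs p))"
  shows "(l \<ge> 3 \<longrightarrow>
           Bnp n p 3 = runs_of_size p 1 * binom (int n - r - 1) (l - r + 1)
                     + (runs_of_size p 2 - runs2_boundary p) * binom (int n - r - 1) (l - r)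
                     + runs2_boundary p * binom (int n - r) (l - r + 1))
       \<and> (l < 3 \<longrightarrow>
           (r = 1 \<longrightarrow> Bnp n p 3 = n choose 3)
         \<and> (r = 2 \<longrightarrow> Bnp n p 3 = 3 * (n - 3)))"
proof (intro conjI impI)
  assume "3 \<le> l"
  then have "length p \<ge> 3" by (simp add: l_def)
  then show "Bnp n p 3 = runs_of_size p 1 * binom (int n - r - 1) (l - r + 1)
                     + (runs_of_size p 2 - runs2_boundary p) * binom (int n - r - 1) (l - r)
                     + runs2_boundary p * binom (int n - r) (l - r + 1)"
    unfolding l_def r_def by (rule big)
next
  assume l3: "l < 3" and r1: "r = 1"
  have lp: "length p < 3" using l3 by (simp add: l_def)
  show "Bnp n p 3 = n choose 3"
  proof (cases p)
    case Nil then show ?thesis using r1 by (simp add: r_def)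
  next
    case (Cons a t)
    show ?thesis
    proof (cases t)
      case Nil
      then show ?thesis using Cons by (simp add: Bnp_cnt oc1_cnt)
    next
      case (Cons b t2)
      have t2: "t2 = []" using lp Cons \<open>p = a#t\<close> by simp
      have ab: "a = b"
      proof (rule ccontr)
        assume "a \<noteq> b"
        then have "runs p = [[a],[b]]" using Cons \<open>p = a#t\<close> t2 by simp
        then show False using r1 by (simp add: r_def)
      qed
      have "Bnp n p 3 = cnt n (\<lambda>w. oc [a,a] w = 3)" using Cons \<open>p = a#t\<close> t2 ab by (simp add: Bnp_cnt)
      also have "\<dots> = cnt n (\<lambda>w. oc [a] w = 3)" by (simp add: oc2 choose2_3)
      also have "\<dots> = n choose 3" by (rule oc1_cnt)
      finally show ?thesis .
    qed
  qed
next
  assume l3: "l < 3" and r2: "r = 2"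
  have lp: "length p < 3" using l3 by (simp add: l_def)
  show "Bnp n p 3 = 3 * (n - 3)"
  proof (cases p)
    case Nil then show ?thesis using r2 by (simp add: r_def)
  next
    case (Cons a t)
    show ?thesis
    proof (cases t)
      case Nil
      then show ?thesis using Cons r2 by (simp add: r_def)
    next
      case (Cons b t2)
      have t2: "t2 = []" using lp Cons \<open>p = a#t\<close> by simp
      have ab: "b = (\<not>a)"
      proof (rule ccontr)
        assume "b \<noteq> (\<not>a)"
        then have "b = a" by auto
        then have "runs p = [[a,a]]" using Cons \<open>p = a#t\<close> t2 by simp
        then show False using r2 by (simp add: r_def)
      qed
      have "Bnp n p 3 = cnt n (\<lambda>w. oc [a, \<not>a] w = 3)" using Cons \<open>p = a#t\<close> t2 ab by (simp add: Bnp_cnt)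
      also have "\<dots> = 3 * (n - 3)" by (rule small2)
      finally show ?thesis .
    qed
  qed
qed


end
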